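(* Consider the uncertain system $$\dot{\mathbf{x}} = \mathbf{A}\mathbf{x} + \mathbf{b}k_p\big(u + \boldsymbol{\theta}^T\boldsymbol{\phi}(\mathbf{x})\big),$$ with $\mathbf{x}\in\mathbb{R}^n$, $u\in\mathbb{R}$, unknown $\mathbf{A}\in\mathbb{R}^{n\times n}$, known $\mathbf{b}\in\mathbb{R}^n$ with $\mathbf{b}^T\mathbf{b}>0$, unknown constant $k_p\ne0$ with known sign $k_p'=\operatorname{sign}(k_p)$, unknown $\boldsymbol{\theta}\in\mathbb{R}^p$, and known locally Lipschitz $\boldsymbol{\phi}:\mathbb{R}^n\to\mathbb{R}^p$. Let $\dot{\mathbf{x}}_r=\mathbf{A}_r\mathbf{x}_r+\mathbf{b}_r r$ with $\mathbf{A}_r$ Hurwitz and $r$ bounded piecewise continuous, and let $\mathbf{P},\mathbf{Q}$ be symmetric positive definite with $\mathbf{A}_r^T\mathbf{P}+\mathbf{P}\mathbf{A}_r+\mathbf{Q}=\mathbf{0}$. Assume ideal gains $\mathbf{k}_x,k_r$ exist with $\mathbf{A}+\mathbf{b}k_p\mathbf{k}_x^T=\mathbf{A}_r$, $\mathbf{b}k_pk_r=\mathbf{b}_r$. Let $\mathbf{W}^T=[\mathbf{A}\ \ \mathbf{b}k_p\ \ \mathbf{b}k_p\boldsymbol{\theta}^T]\in\mathbb{R}^{n\times(n+1+p)}$. Let $t_q>t_0$ and let $\mathbf{Y}_m(t)\in\mathbb{R}^{n\times(n+1+p)}$ be a signal with $\mathbf{Y}_m(t)=\mathbf{W}^T$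 for all $t\ge t_q$ (as produced by the paper's data-storage procedure once the regressor $[\mathbf{x}^T,u,\boldsymbol{\phi}^T]^T$ satisfies the finite excitation condition at time $t_q$), and let $\eta(t)=0$ for $t<t_q$ and $\eta(t)=1$ for $t\ge t_q$. Define $$\mathbf{E}_1=\mathbf{A}_r-\mathbf{Y}_m\begin{bmatrix}\mathbf{I}_n & \mathbf{0}_{n\times(1+p)}\end{bmatrix}^T-\mathbf{Y}_m\mathbf{c}\,\hat{\mathbf{k}}_x^T,\quad \mathbf{E}_2=\mathbf{b}_r-\mathbf{Y}_m\mathbf{c}\,\hat{k}_r,\quad \mathbf{E}_3=\mathbf{Y}_m\begin{bmatrix}\mathbf{0}_{p\times(n+1)} & \mathbf{I}_p\end{bmatrix}^T-\mathbf{Y}_m\mathbf{c}\,\hat{\boldsymbol{\theta}}^T,$$ where $\mathbf{c}=[\mathbf{0}_{1\times n}\ 1\ \mathbf{0}_{1\times p}]^T$. Apply $u=\hat{\mathbf{k}}_x^T\mathbf{x}+\hat{k}_r r-\hat{\boldsymbol{\theta}}^T\boldsymbol{\phi}(\mathbf{x})$ with $$\dot{\hat{\mathbf{k}}}_x=-\mathbf{x}\mathbf{e}^T\mathbf{P}\mathbf{b}k_p'+\eta\mathbf{E}_1^T\mathbf{b}k_p',\quad \dot{\hat{k}}_r=-r\mathbf{e}^T\mathbf{P}\mathbf{b}k_p'+\eta\mathbf{E}_2^T\mathbf{b}k_p',\quad \dot{\hat{\boldsymbol{\theta}}}=\boldsymbol{\phi}(\mathbf{x})\mathbf{e}^T\mathbf{P}\mathbf{b}k_p'+\eta\mathbf{E}_3^T\mathbf{b}k_p',$$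 where $\mathbf{e}=\mathbf{x}-\mathbf{x}_r$. Let $\boldsymbol{\chi}=[\mathbf{e}^T,\tilde{\mathbf{k}}_x^T,\tilde{k}_r,\tilde{\boldsymbol{\theta}}^T]^T$ with $\tilde{\mathbf{k}}_x=\hat{\mathbf{k}}_x-\mathbf{k}_x$, $\tilde{k}_r=\hat{k}_r-k_r$, $\tilde{\boldsymbol{\theta}}=\hat{\boldsymbol{\theta}}-\boldsymbol{\theta}$. Then: (1) the origin of the closed-loop error system in $\boldsymbol{\chi}$ is uniformly stable for $t\ge t_0$; (2) it is exponentially stable for $t>t_q$; (3) for all $t>t_q$, $$\|\boldsymbol{\chi}(t)\|\le \alpha\, e^{-\kappa(t-t_q)}\|\boldsymbol{\chi}(t_0)\|,$$ with $$\kappa=\frac{1}{2}\,\frac{\min\{\lambda_{\min}(\mathbf{Q}),\,2|k_p|^2\mathbf{b}^T\mathbf{b}\}}{\max\{\lambda_{\max}(\mathbf{P}),\,|k_p|\}},\qquad \alpha=\sqrt{\frac{\max\{\lambda_{\max}(\mathbf{P}),\,|k_p|\}}{\min\{\lambda_{\min}(\mathbf{P}),\,|k_p|\}}},$$ so that the rate $\kappa$ depends only on $\mathbf{P},\mathbf{Q},\mathbf{b},|k_p|$ and not on the excitation level of the regressor.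
   Context: A bounded signal $\boldsymbol{\varphi}(t)\in\mathbb{R}^q$ is finitely exciting if there are constants $\gamma,T>0$ and at least one sequence of times $t_1,\dots,t_q$ in an interval $[t,t+T]$ such that the matrix $[\boldsymbol{\varphi}(t_1)\ \cdots\ \boldsymbol{\varphi}(t_q)]$ is invertible with inverse of norm at most $\gamma$ ($\gamma$ is the excitation level). In the paper, once this holds for $\boldsymbol{\varphi}=[\mathbf{x}^T,u,\boldsymbol{\phi}^T]^T$ (by time $t_q$), filtered data are orthonormalized into an orthogonal $\boldsymbol{\Phi}_b$ with $\mathbf{Y}_b=\mathbf{W}^T\boldsymbol{\Phi}_b$, and $\mathbf{Y}_m=\mathbf{Y}_b\boldsymbol{\Phi}_b^T$, $\eta=\det(\boldsymbol{\Phi}_b\boldsymbol{\Phi}_b^T)$, giving $\mathbf{Y}_m=\mathbf{W}^T$ and $\eta=1$ for $t\ge t_q$, and $\eta=0$ before. $k_p'$ is the known sign of $k_p$; $\lambda_{\min},\lambda_{\max}$ denote minimum and maximum eigenvalues. *)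

theory Defs
  imports "HOL-Analysis.Analysis"
begin

text \<open>Vectors in R^n are real^'n, R^p is real^'p; the regressor space
R^(n+1+p) is indexed by the finite sum type 'n + unit + 'p (blocks: x, u, phi).
An n x m matrix is real^'m^'n (rows indexed by 'n).\<close>

definition outer :: "real^'n \<Rightarrow> real^'m \<Rightarrow> real^'m^'n" where
  "outer u v = (\<chi> i j. u$i * v$j)"

definition sym_pos_def :: "real^'n^'n \<Rightarrow> bool" where
  "sym_pos_def M \<longleftrightarrow> transpose M = M \<and> (\<forall>v. v \<noteq> 0 \<longrightarrow> v \<bullet> (M *v v) > 0)"

text \<open>Real eigenvalues of a real square matrix (all eigenvalues, for symmetric M).\<close>
definition real_eigs :: "real^'n^'n \<Rightarrow> real set" where
  "real_eigs M = {l. \<exists>v. v \<noteq> 0 \<and> M *v v = l *s v}"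

definition lambda_min :: "real^'n^'n \<Rightarrow> real" where
  "lambda_min M = Min (real_eigs M)"

definition lambda_max :: "real^'n^'n \<Rightarrow> real" where
  "lambda_max M = Max (real_eigs M)"

definition hurwitz :: "real^'n^'n \<Rightarrow> bool" where
  "hurwitz M \<longleftrightarrow> (\<forall>l::complex. (\<exists>v::complex^'n. v \<noteq> 0 \<and>
      (\<chi> i j. complex_of_real (M$i$j)) *v v = l *s v) \<longrightarrow> Re l < 0)"

definition loc_lipschitz :: "(real^'n \<Rightarrow> real^'p) \<Rightarrow> bool" where
  "loc_lipschitz f \<longleftrightarrow> (\<forall>x. \<exists>\<epsilon>>0. \<exists>L. \<forall>y\<in>ball x \<epsilon>. \<forall>z\<in>ball x \<epsilon>.
      norm (f y - f z) \<le> L * norm (y - z))"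

definition pw_continuous_from :: "real \<Rightarrow> (real \<Rightarrow> real) \<Rightarrow> bool" where
  "pw_continuous_from t0 r \<longleftrightarrow>
     (\<forall>T. finite {t\<in>{t0..T}. \<not> continuous (at t within {t0..}) r}) \<and>
     (\<forall>t>t0. \<exists>l. (r \<longlongrightarrow> l) (at_left t)) \<and>
     (\<forall>t\<ge>t0. \<exists>l. (r \<longlongrightarrow> l) (at_right t))"

text \<open>c = [0_{1xn} 1 0_{1xp}]^T, [I_n 0]^T and [0 I_p]^T.\<close>
definition cvec :: "real^('n::finite + unit + 'p::finite)" where
  "cvec = (\<chi> i. if i = Inr (Inl ()) then 1 else 0)"

definition sel_x :: "real^'n^('n::finite + unit + 'p::finite)" where
  "sel_x = (\<chi> i j. if i = Inl j then 1 else 0)"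

definition sel_th :: "real^'p^('n::finite + unit + 'p::finite)" where
  "sel_th = (\<chi> i j. if i = Inr (Inr j) then 1 else 0)"

definition WT :: "real^'n::finite^'n \<Rightarrow> real^'n \<Rightarrow> real \<Rightarrow> real^'p::finite \<Rightarrow> real^('n + unit + 'p)^'n" where
  "WT A b kp \<theta> = (\<chi> i j. case j of Inl k \<Rightarrow> A$i$k
                                 | Inr (Inl _) \<Rightarrow> b$i * kp
                                 | Inr (Inr k) \<Rightarrow> b$i * kp * \<theta>$k)"

definition E1 :: "real^'n::finite^'n \<Rightarrow> real^('n + unit + 'p::finite)^'n \<Rightarrow> real^'n \<Rightarrow> real^'n^'n" where
  "E1 Ar Y kxh = Ar - Y ** sel_x - outer (Y *v cvec) kxh"

definition E2 :: "real^'n::finite \<Rightarrow> real^('n + unit + 'p::finite)^'n \<Rightarrow> real \<Rightarrow> real^'n" where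
  "E2 br Y krh = br - krh *s (Y *v cvec)"

definition E3 :: "real^('n::finite + unit + 'p::finite)^'n \<Rightarrow> real^'p \<Rightarrow> real^'p^'n" where
  "E3 Y thh = Y ** sel_th - outer (Y *v cvec) thh"

text \<open>Closed-loop trajectory on [s,oo): continuous, and the closed-loop ODEs (plant with
control law u, and the adaptive laws) hold at every t > s outside a countable set
(which accommodates the discontinuities of r and of eta).\<close>
definition cl_solution ::
  "real^'n^'n \<Rightarrow> real^'n \<Rightarrow> real \<Rightarrow> real^'p \<Rightarrow> (real^'n \<Rightarrow> real^'p) \<Rightarrow>
   real^'n^'n \<Rightarrow> real^'n \<Rightarrow> (real \<Rightarrow> real) \<Rightarrow> real^'n^'n \<Rightarrow> (real \<Rightarrow> real^'n) \<Rightarrow>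
   (real \<Rightarrow> real^('n + unit + 'p)^'n) \<Rightarrow> (real \<Rightarrow> real) \<Rightarrow> real \<Rightarrow>
   (real \<Rightarrow> real^'n) \<Rightarrow> (real \<Rightarrow> real^'n) \<Rightarrow> (real \<Rightarrow> real) \<Rightarrow> (real \<Rightarrow> real^'p) \<Rightarrow> bool" where
  "cl_solution A b kp \<theta> \<phi> Ar br r P xr Ym \<eta> s x kxh krh thh \<longleftrightarrow>
     continuous_on {s..} x \<and> continuous_on {s..} kxh \<and> continuous_on {s..} krh \<and>
     continuous_on {s..} thh \<and>
     (\<exists>S. countable S \<and> (\<forall>t\<in>{s<..} - S.
        (let e = x t - xr t;
             u = kxh t \<bullet> x t + krh t * r t - thh t \<bullet> \<phi> (x t);
             g = e \<bullet> (P *v b)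
         in (x has_vector_derivative (A *v x t + (kp * (u + \<theta> \<bullet> \<phi> (x t))) *s b)) (at t) \<and>
            (kxh has_vector_derivative
               ((- g * sgn kp) *s x t + (\<eta> t * sgn kp) *s (transpose (E1 Ar (Ym t) (kxh t)) *v b))) (at t) \<and>
            (krh has_real_derivative
               (- r t * g * sgn kp + \<eta> t * sgn kp * (E2 br (Ym t) (krh t) \<bullet> b))) (at t) \<and>
            (thh has_vector_derivative
               ((g * sgn kp) *s \<phi> (x t) + (\<eta> t * sgn kp) *s (transpose (E3 (Ym t) (thh t)) *v b))) (at t))))"

definition chi :: "real^'n::finite \<Rightarrow> real \<Rightarrow> real^'p::finite \<Rightarrow> (real \<Rightarrow> real^'n) \<Rightarrow> (real \<Rightarrow> real^'n) \<Rightarrow>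
   (real \<Rightarrow> real^'n) \<Rightarrow> (real \<Rightarrow> real) \<Rightarrow> (real \<Rightarrow> real^'p) \<Rightarrow> real \<Rightarrow> real^('n + 'n + unit + 'p)" where
  "chi kx kr \<theta> x xr kxh krh thh t = (\<chi> i. case i of
       Inl j \<Rightarrow> (x t - xr t)$j
     | Inr (Inl j) \<Rightarrow> (kxh t - kx)$j
     | Inr (Inr (Inl _)) \<Rightarrow> krh t - kr
     | Inr (Inr (Inr j)) \<Rightarrow> (thh t - \<theta>)$j)"

end

theory Submission
  imports Defs
begin


lemma deriv_right_nonneg:
  fixes g :: "real \<Rightarrow> real"
  assumes "(g has_real_derivative D) (at s)" "s < b" "\<And>t. s < t \<Longrightarrow> t \<le> b \<Longrightarrow> g t > g s"
  shows "D \<ge> 0"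
proof -
  have "(g has_real_derivative D) (at s within {s<..})"
    using assms(1) by (rule has_field_derivative_at_within)
  then have lim: "((\<lambda>y. (g y - g s) / (y - s)) \<longlongrightarrow> D) (at s within {s<..})"
    by (simp add: has_field_derivative_iff)
  have ev: "eventually (\<lambda>y. (g y - g s) / (y - s) \<ge> 0) (at s within {s<..})"
    unfolding eventually_at
    apply (rule exI[of _ "b - s"])
    using assms(2,3) by (auto simp: dist_real_def intro!: divide_nonneg_pos less_imp_le)
  have "at s within {s<..} \<noteq> bot"
    by (simp add: at_within_eq_bot_iff)
  then show ?thesis using tendsto_lowerbound[OF lim ev] by simp
qed

lemma mono_countable:
  fixes f f' :: "real \<Rightarrow> real"
  assumes ab: "a \<le> b" and C: "countable C" and cont: "continuous_on {a..b} f"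
    and der: "\<And>t. t\<in>{a<..<b} - C \<Longrightarrow> (f has_real_derivative f' t) (at t)"
    and neg: "\<And>t. t\<in>{a<..<b} - C \<Longrightarrow> f' t \<le> 0"
  shows "f b \<le> f a"
proof (rule ccontr)
  assume "\<not> f b \<le> f a"
  then have fab: "f a < f b" by simp
  then have "a < b" using ab by (cases "a = b") auto
  define \<epsilon> where "\<epsilon> = (f b - f a) / (2 * (b - a))"
  have \<epsilon>: "\<epsilon> > 0" using fab \<open>a < b\<close> by (simp add: \<epsilon>_def)
  define g where "g t = f t - \<epsilon> * (t - a)" for t
  have h: "0 < (f b - f a)*(b-a)" using fab \<open>a < b\<close> by simp
  have gab: "g a < g b" using \<open>a < b\<close> 
    apply (simp add: g_def \<epsilon>_def field_simps)
    using h by (simp add: algebra_simps)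
  have gcont: "continuous_on {a..b} g" unfolding g_def
    by (intro continuous_intros cont)
  have "uncountable {g a<..<g b}" using gab by (simp add: uncountable_open_interval)
  moreover have "countable (g ` C)" using C by simp
  ultimately obtain y where y: "y \<in> {g a<..<g b}" "y \<notin> g ` C"
    by (metis countable_subset subsetI)
  define K where "K = {t\<in>{a..b}. g t \<le> y}"
  have Keq: "K = {a..b} \<inter> g -` {..y}" by (auto simp: K_def)
  have "closed K"
    unfolding Keq by (rule continuous_closed_preimage[OF gcont]) auto
  moreover have "bounded K" by (rule bounded_subset[of "{a..b}"]) (auto simp: K_def)
  ultimately have "compact K" using compact_eq_bounded_closed by blast
  moreover have "a \<in> K" using y ab by (auto simp: K_def)
  ultimately have "compact K" "K \<noteq> {}" by auto
  then obtain s where s: "s \<in> K" "\<And>t. t \<in> K \<Longrightarrow> t \<le> s"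
    using compact_attains_sup by metis
  have sK: "a \<le> s" "s \<le> b" "g s \<le> y" using s(1) by (auto simp: K_def)
  have above: "g t > y" if "s < t" "t \<le> b" for t
  proof (rule ccontr)
    assume "\<not> g t > y"
    then have "t \<in> K" using that sK by (auto simp: K_def)
    then show False using s(2)[of t] that by simp
  qed
  have "s \<noteq> b" using sK y by auto
  then have "s < b" using sK by simp
  have cs: "continuous_on {s..b} g" using sK by (intro continuous_on_subset[OF gcont]) auto
  obtain z where z: "s \<le> z" "z \<le> b" "g z = y"
    using IVT'[of g s y b, OF sK(3) _ _ cs] y sK by auto
  have "z = s" using z above by force
  then have gs: "g s = y" using z by simp
  have "s \<noteq> a" using gs y by auto
  then have sin: "s \<in> {a<..<b} - C" using sK \<open>s < b\<close> y(2) gs by auto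
  have "(g has_real_derivative (f' s - \<epsilon>)) (at s)"
    unfolding g_def by (auto intro!: derivative_eq_intros der[OF sin])
  then have "f' s - \<epsilon> \<ge> 0"
    by (rule deriv_right_nonneg[OF _ \<open>s < b\<close>]) (use above gs in auto)
  with neg[OF sin] \<epsilon> show False by simp
qed



lemma sym_inner:
  fixes M :: "real^'n^'n"
  assumes "transpose M = M"
  shows "x \<bullet> (M *v y) = (M *v x) \<bullet> y"
proof -
  have "x \<bullet> (M *v y) = (x v* M) \<bullet> y" by (simp add: dot_lmul_matrix)
  also have "x v* M = M *v x" using vector_transpose_matrix[of x M] assms by simp
  finally show ?thesis .
qed

lemma rayleigh_min:
  fixes M :: "real^'n^'n"
  assumes sym: "transpose M = M"
  shows "\<exists>\<mu>. \<mu> \<in> real_eigs M \<and> (\<forall>x. \<mu> * (x \<bullet> x) \<le> x \<bullet> (M *v x))"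
proof -
  define f where "f x = x \<bullet> (M *v x)" for x :: "real^'n"
  have cf: "continuous_on (sphere 0 1) f" unfolding f_def
    by (intro continuous_intros linear_continuous_on matrix_vector_mul_linear)
  have "sphere (0::real^'n) 1 \<noteq> {}" by (simp add: sphere_eq_empty)
  then obtain v where v: "v \<in> sphere 0 1" "\<And>y. y \<in> sphere 0 1 \<Longrightarrow> f v \<le> f y"
    using continuous_attains_inf[OF compact_sphere _ cf] by blast
  define \<mu> where "\<mu> = f v"
  have fscale: "f (c *\<^sub>R x) = c^2 * f x" for c x
    by (simp add: f_def matrix_vector_mult_scaleR power2_eq_square)
  have lb: "\<mu> * (x \<bullet> x) \<le> f x" for x
  proof (cases "x = 0")
    case True then show ?thesis by (simp add: f_def)
  next
    case False
    define u where "u = (1 / norm x) *\<^sub>R x"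
    have "u \<in> sphere 0 1" using False by (simp add: u_def)
    then have "\<mu> \<le> f u" using v(2) by (simp add: \<mu>_def)
    have "x = norm x *\<^sub>R u" using False by (simp add: u_def)
    then have "f x = (norm x)^2 * f u" using fscale by metis
    moreover have "x \<bullet> x = (norm x)^2" by (simp add: power2_norm_eq_inner)
    ultimately show ?thesis using \<open>\<mu> \<le> f u\<close> by (simp add: mult_right_mono mult.commute)
  qed
  define q where "q x = f x - \<mu> * (x \<bullet> x)" for x
  have qnn: "q x \<ge> 0" for x using lb[of x] by (simp add: q_def)
  have vv: "v \<bullet> v = 1" using v(1) by (simp add: inner_commute norm_eq_1)
  have qv: "q v = 0" using vv by (simp add: q_def \<mu>_def)
  define w where "w = M *v v - \<mu> *\<^sub>R v"
  have wv: "w \<bullet> v = 0"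
    using vv by (simp add: w_def inner_diff_left inner_diff_right f_def \<mu>_def inner_commute[of "M *v v" v])
  have expand: "q (v + t *\<^sub>R w) = q v + 2 * t * (w \<bullet> w) + t^2 * q w" for t
  proof -
    have s1: "v \<bullet> (M *v w) = (M *v v) \<bullet> w" by (rule sym_inner[OF sym])
    have "w \<bullet> w = w \<bullet> (M *v v) - \<mu> * (w \<bullet> v)" by (simp add: w_def inner_diff_right)
    then have ww: "w \<bullet> w = w \<bullet> (M *v v)" using wv by simp
    show ?thesis
      unfolding q_def f_def
      by (simp add: algebra_simps inner_add_left inner_add_right s1 inner_commute[of v w] ww wv
          power2_eq_square inner_commute[of "M *v v" w])
  qed
  have "w = 0"
  proof (rule ccontr)
    assume "w \<noteq> 0"
    then have N: "w \<bullet> w > 0" by simp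
    define c where "c = q w"
    have c: "c \<ge> 0" using qnn by (simp add: c_def)
    define t where "t = - (w \<bullet> w) / (c + 1)"
    have "q (v + t *\<^sub>R w) = 2 * t * (w \<bullet> w) + t^2 * c"
      using expand qv by (simp add: c_def)
    also have "\<dots> = t * (2 * (w \<bullet> w) + t * c)" by (simp add: algebra_simps power2_eq_square)
    also have "\<dots> < 0"
    proof (rule mult_neg_pos)
      show "t < 0" using N c by (simp add: t_def)
      have "c / (c + 1) < 2" using c by (simp add: divide_less_eq)
      then have "(w \<bullet> w) * (c / (c + 1)) < (w \<bullet> w) * 2"
        by (rule mult_strict_left_mono[OF _ N])
      moreover have "t * c = - ((w \<bullet> w) * (c / (c + 1)))" by (simp add: t_def)
      ultimately show "0 < 2 * (w \<bullet> w) + t * c" by linarith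
    qed
    finally show False using qnn[of "v + t *\<^sub>R w"] by simp
  qed
  then have "M *v v = \<mu> *s v" by (simp add: w_def scalar_mult_eq_scaleR)
  moreover have "v \<noteq> 0" using v(1) by auto
  ultimately have "\<mu> \<in> real_eigs M" by (auto simp: real_eigs_def)
  then show ?thesis using lb by (auto simp: f_def)
qed

lemma rayleigh_max:
  fixes M :: "real^'n^'n"
  assumes sym: "transpose M = M"
  shows "\<exists>\<mu>. \<mu> \<in> real_eigs M \<and> (\<forall>x. x \<bullet> (M *v x) \<le> \<mu> * (x \<bullet> x))"
proof -
  have "transpose (-M) = - transpose M" by (simp add: transpose_def vec_eq_iff)
  then have "transpose (-M) = -M" using sym by simp
  from rayleigh_min[OF this] obtain \<mu> where
    mu: "\<mu> \<in> real_eigs (-M)" "\<And>x. \<mu> * (x \<bullet> x) \<le> x \<bullet> ((-M) *v x)" by blast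
  have neg: "(-M) *v x = - (M *v x)" for x
    by (simp add: matrix_vector_mult_def vec_eq_iff sum_negf)
  from mu(1) obtain v where "v \<noteq> 0" "(-M) *v v = \<mu> *s v" by (auto simp: real_eigs_def)
  then have "M *v v = (-\<mu>) *s v" using neg[of v] by (simp add: vec_eq_iff) (metis minus_equation_iff)
  then have "-\<mu> \<in> real_eigs M" using \<open>v \<noteq> 0\<close> by (auto simp: real_eigs_def)
  moreover have "x \<bullet> (M *v x) \<le> (-\<mu>) * (x \<bullet> x)" for x
    using mu(2)[of x] neg[of x] by simp
  ultimately show ?thesis by blast
qed

lemma eigs_finite:
  fixes M :: "real^'n^'n"
  assumes sym: "transpose M = M"
  shows "finite (real_eigs M)"
proof -
  define ev where "ev l = (SOME v. v \<noteq> 0 \<and> M *v v = l *s v)" for l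
  have ev: "ev l \<noteq> 0 \<and> M *v ev l = l *s ev l" if "l \<in> real_eigs M" for l
  proof -
    have "\<exists>v. v \<noteq> 0 \<and> M *v v = l *s v" using that by (simp add: real_eigs_def)
    then show ?thesis unfolding ev_def by (rule someI_ex)
  qed
  have inj: "inj_on ev (real_eigs M)"
  proof (rule inj_onI)
    fix l1 l2 assume l: "l1 \<in> real_eigs M" "l2 \<in> real_eigs M" "ev l1 = ev l2"
    then have "l1 *s ev l1 = l2 *s ev l1" using ev[OF l(1)] ev[OF l(2)] by metis
    then have "(l1 - l2) *\<^sub>R ev l1 = 0" by (simp add: scalar_mult_eq_scaleR algebra_simps)
    then show "l1 = l2" using ev[OF l(1)] by simp
  qed
  have orth: "pairwise orthogonal (ev ` real_eigs M)"
  proof (clarsimp simp: pairwise_def)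
    fix l1 l2 assume l: "l1 \<in> real_eigs M" "l2 \<in> real_eigs M" "ev l1 \<noteq> ev l2"
    then have "l1 \<noteq> l2" by auto
    have "l2 * (ev l1 \<bullet> ev l2) = ev l1 \<bullet> (M *v ev l2)"
      using ev[OF l(2)] by (simp add: scalar_mult_eq_scaleR)
    also have "\<dots> = (M *v ev l1) \<bullet> ev l2" by (rule sym_inner[OF sym])
    also have "\<dots> = l1 * (ev l1 \<bullet> ev l2)"
      using ev[OF l(1)] by (simp add: scalar_mult_eq_scaleR)
    finally have "(l1 - l2) * (ev l1 \<bullet> ev l2) = 0" by (simp only: left_diff_distrib)
    then have "ev l1 \<bullet> ev l2 = 0" using \<open>l1 \<noteq> l2\<close> by simp
    then show "orthogonal (ev l1) (ev l2)" by (simp add: orthogonal_def)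
  qed
  have "0 \<notin> ev ` real_eigs M" using ev by force
  then have "independent (ev ` real_eigs M)" by (rule pairwise_orthogonal_independent[OF orth])
  then have "finite (ev ` real_eigs M)" by (rule independent_imp_finite)
  then show ?thesis using inj by (rule finite_imageD)
qed

lemma spectral_bounds:
  fixes M :: "real^'n^'n"
  assumes sym: "transpose M = M"
  shows "lambda_min M \<in> real_eigs M" "lambda_max M \<in> real_eigs M"
    "lambda_min M * (x \<bullet> x) \<le> x \<bullet> (M *v x)" "x \<bullet> (M *v x) \<le> lambda_max M * (x \<bullet> x)"
proof -
  have fin: "finite (real_eigs M)" by (rule eigs_finite[OF sym])
  obtain \<mu> where mu: "\<mu> \<in> real_eigs M" "\<And>x. \<mu> * (x \<bullet> x) \<le> x \<bullet> (M *v x)"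
    using rayleigh_min[OF sym] by blast
  obtain \<nu> where nu: "\<nu> \<in> real_eigs M" "\<And>x. x \<bullet> (M *v x) \<le> \<nu> * (x \<bullet> x)"
    using rayleigh_max[OF sym] by blast
  have ne: "real_eigs M \<noteq> {}" using mu by auto
  show "lambda_min M \<in> real_eigs M" unfolding lambda_min_def using fin ne by (rule Min_in)
  show "lambda_max M \<in> real_eigs M" unfolding lambda_max_def using fin ne by (rule Max_in)
  have "lambda_min M \<le> \<mu>" unfolding lambda_min_def using fin mu(1) by (rule Min_le)
  then have "lambda_min M * (x \<bullet> x) \<le> \<mu> * (x \<bullet> x)" by (simp add: mult_right_mono)
  then show "lambda_min M * (x \<bullet> x) \<le> x \<bullet> (M *v x)" using mu(2)[of x] by linarith
  have "\<nu> \<le> lambda_max M" unfolding lambda_max_def using fin nu(1) by (rule Max_ge)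
  then have "\<nu> * (x \<bullet> x) \<le> lambda_max M * (x \<bullet> x)" by (simp add: mult_right_mono)
  then show "x \<bullet> (M *v x) \<le> lambda_max M * (x \<bullet> x)" using nu(2)[of x] by linarith
qed

lemma pd_lambda_min_pos:
  fixes M :: "real^'n^'n"
  assumes "sym_pos_def M"
  shows "lambda_min M > 0"
proof -
  have sym: "transpose M = M" using assms by (simp add: sym_pos_def_def)
  obtain v where v: "v \<noteq> 0" "M *v v = lambda_min M *s v"
    using spectral_bounds(1)[OF sym] by (auto simp: real_eigs_def)
  have "v \<bullet> (M *v v) > 0" using assms v(1) by (simp add: sym_pos_def_def)
  then have "lambda_min M * (v \<bullet> v) > 0" using v(2) by (simp add: scalar_mult_eq_scaleR)
  moreover have "v \<bullet> v > 0" using v(1) by simp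
  ultimately show ?thesis by (simp add: zero_less_mult_iff)
qed




lemma WT_sel_x: "WT A b kp \<theta> ** sel_x = A"
  by (simp add: vec_eq_iff matrix_matrix_mult_def sel_x_def WT_def if_distrib[of "\<lambda>y. _ * y"] sum.delta' cong: if_cong)

lemma WT_cvec: "WT A b kp \<theta> *v cvec = kp *s b"
  by (simp add: vec_eq_iff matrix_vector_mult_def cvec_def WT_def if_distrib[of "\<lambda>y. _ * y"] sum.delta' cong: if_cong)

lemma WT_sel_th: "WT A b kp \<theta> ** sel_th = kp *\<^sub>R outer b \<theta>"
  by (simp add: vec_eq_iff matrix_matrix_mult_def sel_th_def WT_def outer_def if_distrib[of "\<lambda>y. _ * y"] sum.delta' cong: if_cong)

lemma tr_outer: "transpose (outer u v) *v w = (u \<bullet> w) *\<^sub>R v"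
  by (simp add: vec_eq_iff matrix_vector_mult_def transpose_def outer_def inner_vec_def sum_distrib_left algebra_simps)

lemma outer_mv: "outer u v *v w = (v \<bullet> w) *\<^sub>R u"
  by (simp add: vec_eq_iff matrix_vector_mult_def outer_def inner_vec_def sum_distrib_left algebra_simps)

lemma outer_diff: "outer u v - outer u w = outer u (v - w)"
  by (simp add: vec_eq_iff outer_def algebra_simps)

lemma E1_WT: assumes "A + kp *\<^sub>R outer b kx = Ar"
  shows "E1 Ar (WT A b kp \<theta>) kxh = - (kp *\<^sub>R outer b (kxh - kx))"
  using assms[symmetric]
  by (simp add: E1_def WT_sel_x WT_cvec vec_eq_iff outer_def scalar_mult_eq_scaleR algebra_simps)

lemma E2_WT: assumes "(kp * kr) *s b = br"
  shows "E2 br (WT A b kp \<theta>) krh = - ((kp * (krh - kr)) *\<^sub>R b)"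
  using assms[symmetric]
  by (simp add: E2_def WT_cvec vec_eq_iff scalar_mult_eq_scaleR algebra_simps)

lemma E3_WT: "E3 (WT A b kp \<theta>) thh = - (kp *\<^sub>R outer b (thh - \<theta>))"
  by (simp add: E3_def WT_sel_th WT_cvec vec_eq_iff outer_def scalar_mult_eq_scaleR algebra_simps)




lemma hvd_inner:
  assumes "(f has_vector_derivative f') (at t)" "(g has_vector_derivative g') (at t)"
  shows "((\<lambda>s. f s \<bullet> g s) has_real_derivative (f' \<bullet> g t + f t \<bullet> g')) (at t)"
proof -
  have "((\<lambda>s. f s \<bullet> g s) has_derivative (\<lambda>h. f t \<bullet> (h *\<^sub>R g') + (h *\<^sub>R f') \<bullet> g t)) (at t)"
    using assms unfolding has_vector_derivative_def by (rule has_derivative_inner)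
  then show ?thesis unfolding has_field_derivative_def
    by (rule has_derivative_eq_rhs) (auto simp: fun_eq_iff algebra_simps)
qed

lemma lyap_q:
  fixes Ar P Q :: "real^'n^'n"
  assumes "transpose Ar ** P + P ** Ar + Q = 0" "transpose P = P"
  shows "2 * ((Ar *v e) \<bullet> (P *v e)) = - (e \<bullet> (Q *v e))"
proof -
  have "(Ar *v e) \<bullet> (P *v e) = (e v* transpose Ar) \<bullet> (P *v e)" by simp
  also have "\<dots> = e \<bullet> (transpose Ar *v (P *v e))" by (rule dot_lmul_matrix)
  also have "\<dots> = e \<bullet> ((transpose Ar ** P) *v e)" by (simp only: matrix_vector_mul_assoc)
  finally have a: "(Ar *v e) \<bullet> (P *v e) = e \<bullet> ((transpose Ar ** P) *v e)" .
  have "(Ar *v e) \<bullet> (P *v e) = (P *v e) \<bullet> (Ar *v e)" by (rule inner_commute)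
  also have "\<dots> = e \<bullet> (P *v (Ar *v e))" by (rule sym_inner[OF assms(2), symmetric])
  finally have b: "(Ar *v e) \<bullet> (P *v e) = e \<bullet> ((P ** Ar) *v e)"
    by (simp add: matrix_vector_mul_assoc)
  have "transpose Ar ** P + P ** Ar = - Q" using assms(1) by (simp add: eq_neg_iff_add_eq_0)
  have "(transpose Ar ** P) *v e + (P ** Ar) *v e = (transpose Ar ** P + P ** Ar) *v e"
    by (simp add: matrix_vector_mult_add_rdistrib)
  also have "\<dots> = (-Q) *v e" using \<open>transpose Ar ** P + P ** Ar = - Q\<close> by simp
  also have "\<dots> = - (Q *v e)" by (simp add: vec_eq_iff matrix_vector_mult_def sum_negf)
  finally have c: "(transpose Ar ** P) *v e + (P ** Ar) *v e = - (Q *v e)" .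
  have "2 * ((Ar *v e) \<bullet> (P *v e)) = e \<bullet> ((transpose Ar ** P) *v e + (P ** Ar) *v e)"
    using a b by (simp add: inner_add_right)
  then show ?thesis using c by simp
qed

definition Vf :: "real^'n^'n \<Rightarrow> real \<Rightarrow> real^'n \<Rightarrow> real \<Rightarrow> real^'p \<Rightarrow> (real \<Rightarrow> real^'n) \<Rightarrow> (real \<Rightarrow> real^'n) \<Rightarrow>
   (real \<Rightarrow> real^'n) \<Rightarrow> (real \<Rightarrow> real) \<Rightarrow> (real \<Rightarrow> real^'p) \<Rightarrow> real \<Rightarrow> real" where
  "Vf P kp kx kr \<theta> x xr kxh krh thh t = (x t - xr t) \<bullet> (P *v (x t - xr t)) +
     \<bar>kp\<bar> * ((kxh t - kx) \<bullet> (kxh t - kx) + (krh t - kr)^2 + (thh t - \<theta>) \<bullet> (thh t - \<theta>))"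

definition Tf :: "real^'n \<Rightarrow> real \<Rightarrow> real^'p \<Rightarrow> (real \<Rightarrow> real^'n) \<Rightarrow> (real \<Rightarrow> real) \<Rightarrow> (real \<Rightarrow> real^'p) \<Rightarrow> real \<Rightarrow> real" where
  "Tf kx kr \<theta> kxh krh thh t = (kxh t - kx) \<bullet> (kxh t - kx) + (krh t - kr)^2 + (thh t - \<theta>) \<bullet> (thh t - \<theta>)"

lemma tr_neg_outer: "transpose (- (c *\<^sub>R outer u v)) *v w = (- (c * (u \<bullet> w))) *\<^sub>R v"
  by (simp add: vec_eq_iff matrix_vector_mult_def transpose_def outer_def inner_vec_def
      sum_distrib_left algebra_simps sum_negf)

lemma V_deriv:
  fixes A :: "real^'n^'n" and b :: "real^'n" and kp :: real and \<theta> :: "real^'p"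
    and \<phi> :: "real^'n \<Rightarrow> real^'p" and Ar :: "real^'n^'n" and br :: "real^'n"
    and P Q :: "real^'n^'n" and Ym :: "real \<Rightarrow> real^('n + unit + 'p)^'n"
  assumes symP: "transpose P = P"
    and lyap: "transpose Ar ** P + P ** Ar + Q = 0"
    and match_x: "A + kp *\<^sub>R outer b kx = Ar"
    and match_r: "(kp * kr) *s b = br"
    and kp: "kp \<noteq> 0"
    and etaY: "\<eta> t = 0 \<or> (\<eta> t = 1 \<and> Ym t = WT A b kp \<theta>)"
    and hxr: "(xr has_vector_derivative (Ar *v xr t + r t *s br)) (at t)"
    and H: "(let e = x t - xr t;
             u = kxh t \<bullet> x t + krh t * r t - thh t \<bullet> \<phi> (x t);
             g = e \<bullet> (P *v b)
         in (x has_vector_derivative (A *v x t + (kp * (u + \<theta> \<bullet> \<phi> (x t))) *s b)) (at t) \<and>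
            (kxh has_vector_derivative
               ((- g * sgn kp) *s x t + (\<eta> t * sgn kp) *s (transpose (E1 Ar (Ym t) (kxh t)) *v b))) (at t) \<and>
            (krh has_real_derivative
               (- r t * g * sgn kp + \<eta> t * sgn kp * (E2 br (Ym t) (krh t) \<bullet> b))) (at t) \<and>
            (thh has_vector_derivative
               ((g * sgn kp) *s \<phi> (x t) + (\<eta> t * sgn kp) *s (transpose (E3 (Ym t) (thh t)) *v b))) (at t))"
  shows "(Vf P kp kx kr \<theta> x xr kxh krh thh has_real_derivative
           (- ((x t - xr t) \<bullet> (Q *v (x t - xr t))) - 2 * \<eta> t * kp^2 * (b \<bullet> b) * Tf kx kr \<theta> kxh krh thh t)) (at t)"
proof -
  define e where "e = x t - xr t"
  define g where "g = e \<bullet> (P *v b)"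
  define sk where "sk = sgn kp"
  define Kx where "Kx = kxh t - kx"
  define Kr where "Kr = krh t - kr"
  define Th where "Th = thh t - \<theta>"
  define bb where "bb = b \<bullet> b"
  define X' where "X' = A *v x t + (kp * (kxh t \<bullet> x t + krh t * r t - thh t \<bullet> \<phi> (x t) + \<theta> \<bullet> \<phi> (x t))) *s b"
  define R' where "R' = Ar *v xr t + r t *s br"
  define K' where "K' = (- g * sk) *s x t + (\<eta> t * sk) *s (transpose (E1 Ar (Ym t) (kxh t)) *v b)"
  define k' where "k' = - r t * g * sk + \<eta> t * sk * (E2 br (Ym t) (krh t) \<bullet> b)"
  define T' where "T' = (g * sk) *s \<phi> (x t) + (\<eta> t * sk) *s (transpose (E3 (Ym t) (thh t)) *v b)"
  have hx: "(x has_vector_derivative X') (at t)" and hk: "(kxh has_vector_derivative K') (at t)"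
    and hkr: "(krh has_real_derivative k') (at t)" and hth: "(thh has_vector_derivative T') (at t)"
    using H by (simp_all add: Let_def X'_def K'_def k'_def T'_def g_def e_def sk_def)
  define ep where "ep = X' - R'"
  have he: "((\<lambda>s. x s - xr s) has_vector_derivative ep) (at t)"
    unfolding ep_def by (intro has_vector_derivative_diff hx hxr[folded R'_def])
  have hPe: "((\<lambda>s. P *v (x s - xr s)) has_vector_derivative P *v ep) (at t)"
    by (rule bounded_linear.has_vector_derivative[OF matrix_vector_mul_bounded_linear he])
  have d1: "((\<lambda>s. (x s - xr s) \<bullet> (P *v (x s - xr s))) has_real_derivative (ep \<bullet> (P *v e) + e \<bullet> (P *v ep))) (at t)"
    using hvd_inner[OF he hPe] by (simp add: e_def)
  have hK: "((\<lambda>s. kxh s - kx) has_vector_derivative K') (at t)"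
    using has_vector_derivative_diff[OF hk has_vector_derivative_const[of kx]] by simp
  have d2: "((\<lambda>s. (kxh s - kx) \<bullet> (kxh s - kx)) has_real_derivative (K' \<bullet> Kx + Kx \<bullet> K')) (at t)"
    using hvd_inner[OF hK hK] by (simp add: Kx_def)
  have d3: "((\<lambda>s. (krh s - kr)^2) has_real_derivative (2 * Kr * k')) (at t)"
    by (auto intro!: derivative_eq_intros hkr simp: Kr_def)
  have hT: "((\<lambda>s. thh s - \<theta>) has_vector_derivative T') (at t)"
    using has_vector_derivative_diff[OF hth has_vector_derivative_const[of \<theta>]] by simp
  have d4: "((\<lambda>s. (thh s - \<theta>) \<bullet> (thh s - \<theta>)) has_real_derivative (T' \<bullet> Th + Th \<bullet> T')) (at t)"
    using hvd_inner[OF hT hT] by (simp add: Th_def)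
  have dV: "(Vf P kp kx kr \<theta> x xr kxh krh thh has_real_derivative
      ((ep \<bullet> (P *v e) + e \<bullet> (P *v ep)) + \<bar>kp\<bar> * ((K' \<bullet> Kx + Kx \<bullet> K') + 2 * Kr * k' + (T' \<bullet> Th + Th \<bullet> T')))) (at t)"
    unfolding Vf_def[abs_def]
    by (intro DERIV_add d1 DERIV_cmult d2 d3 d4)
  have abs_sk: "\<bar>kp\<bar> * sk = kp" by (simp add: sk_def abs_mult_sgn)
  have sk_kp: "sk * kp = \<bar>kp\<bar>" using kp by (cases "kp > 0") (auto simp: sk_def)
  have EK: "(\<eta> t * sk) *s (transpose (E1 Ar (Ym t) (kxh t)) *v b) = (- (\<eta> t * \<bar>kp\<bar> * bb)) *\<^sub>R Kx"
    using etaY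
  proof
    assume "\<eta> t = 0" then show ?thesis by (simp add: scalar_mult_eq_scaleR)
  next
    assume h: "\<eta> t = 1 \<and> Ym t = WT A b kp \<theta>"
    have "transpose (E1 Ar (Ym t) (kxh t)) *v b = (- (kp * bb)) *\<^sub>R Kx"
      using h by (simp only: E1_WT[OF match_x] tr_neg_outer Kx_def bb_def)
    then have "(\<eta> t * sk) *s (transpose (E1 Ar (Ym t) (kxh t)) *v b) = (- (sk * kp * bb)) *\<^sub>R Kx"
      using h by (simp add: scalar_mult_eq_scaleR)
    then show ?thesis using h sk_kp by simp
  qed
  have ER: "\<eta> t * sk * (E2 br (Ym t) (krh t) \<bullet> b) = - (\<eta> t * \<bar>kp\<bar> * bb * Kr)"
    using etaY
  proof
    assume "\<eta> t = 0" then show ?thesis by simp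
  next
    assume h: "\<eta> t = 1 \<and> Ym t = WT A b kp \<theta>"
    have "E2 br (Ym t) (krh t) \<bullet> b = - (kp * Kr * bb)"
      using h by (simp add: E2_WT[OF match_r] Kr_def bb_def)
    then show ?thesis using h sk_kp by (simp add: algebra_simps)
  qed
  have ET: "(\<eta> t * sk) *s (transpose (E3 (Ym t) (thh t)) *v b) = (- (\<eta> t * \<bar>kp\<bar> * bb)) *\<^sub>R Th"
    using etaY
  proof
    assume "\<eta> t = 0" then show ?thesis by (simp add: scalar_mult_eq_scaleR)
  next
    assume h: "\<eta> t = 1 \<and> Ym t = WT A b kp \<theta>"
    have "transpose (E3 (Ym t) (thh t)) *v b = (- (kp * bb)) *\<^sub>R Th"
      using h by (simp only: E3_WT tr_neg_outer Th_def bb_def)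
    then have "(\<eta> t * sk) *s (transpose (E3 (Ym t) (thh t)) *v b) = (- (sk * kp * bb)) *\<^sub>R Th"
      using h by (simp add: scalar_mult_eq_scaleR)
    then show ?thesis using h sk_kp by simp
  qed
  define z where "z = Kx \<bullet> x t + Kr * r t - Th \<bullet> \<phi> (x t)"
  have Ax: "A *v x t = Ar *v x t - (kp * (kx \<bullet> x t)) *\<^sub>R b"
  proof -
    have "A = Ar - kp *\<^sub>R outer b kx" using match_x by (simp add: algebra_simps)
    moreover have "(kp *\<^sub>R outer b kx) *v x t = (kp * (kx \<bullet> x t)) *\<^sub>R b"
      by (simp add: vec_eq_iff matrix_vector_mult_def outer_def inner_vec_def sum_distrib_left algebra_simps)
    ultimately show ?thesis by (simp add: matrix_vector_mult_diff_rdistrib)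
  qed
  define c1 where "c1 = kp * (kxh t \<bullet> x t + krh t * r t - thh t \<bullet> \<phi> (x t) + \<theta> \<bullet> \<phi> (x t))"
  have sc: "c1 - kp * (kx \<bullet> x t) - r t * (kp * kr) = kp * z"
    unfolding c1_def z_def Kx_def Kr_def Th_def by (simp add: inner_diff_left algebra_simps)
  have rbr: "r t *s br = (r t * (kp * kr)) *\<^sub>R b"
    using match_r[symmetric] by (simp add: scalar_mult_eq_scaleR)
  have "ep = (Ar *v x t - Ar *v xr t) + (c1 - kp * (kx \<bullet> x t) - r t * (kp * kr)) *\<^sub>R b"
    unfolding ep_def X'_def R'_def rbr Ax c1_def[symmetric]
    by (simp add: scalar_mult_eq_scaleR scaleR_diff_left)
  then have ep: "ep = Ar *v e + (kp * z) *\<^sub>R b"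
    unfolding sc e_def by (simp add: matrix_vector_mult_diff_distrib)
  have "b \<bullet> (P *v e) = (P *v b) \<bullet> e" by (rule sym_inner[OF symP])
  then have bPe: "b \<bullet> (P *v e) = g" by (simp add: g_def inner_commute)
  have "e \<bullet> (P *v ep) = (P *v e) \<bullet> ep" by (rule sym_inner[OF symP])
  also have "\<dots> = ep \<bullet> (P *v e)" by (rule inner_commute)
  finally have P1: "ep \<bullet> (P *v e) + e \<bullet> (P *v ep) = 2 * (ep \<bullet> (P *v e))" by simp
  have "ep \<bullet> (P *v e) = (Ar *v e) \<bullet> (P *v e) + kp * z * g"
    by (simp add: ep inner_add_left bPe)
  then have P2: "2 * (ep \<bullet> (P *v e)) = - (e \<bullet> (Q *v e)) + 2 * kp * z * g"
    using lyap_q[OF lyap symP, of e] by simp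
  have "K' = (- g * sk) *\<^sub>R x t + (- (\<eta> t * \<bar>kp\<bar> * bb)) *\<^sub>R Kx"
    unfolding K'_def EK by (simp add: scalar_mult_eq_scaleR)
  then have "K' \<bullet> Kx = (- g * sk) * (Kx \<bullet> x t) + (- (\<eta> t * \<bar>kp\<bar> * bb)) * (Kx \<bullet> Kx)"
    by (simp add: inner_add_left inner_diff_left inner_commute[of "x t" Kx])
  then have P4: "K' \<bullet> Kx + Kx \<bullet> K' = 2 * (- g * sk * (Kx \<bullet> x t) - \<eta> t * \<bar>kp\<bar> * bb * (Kx \<bullet> Kx))"
    by (simp add: inner_commute[of Kx K'])
  have "T' = (g * sk) *\<^sub>R \<phi> (x t) + (- (\<eta> t * \<bar>kp\<bar> * bb)) *\<^sub>R Th"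
    unfolding T'_def ET by (simp add: scalar_mult_eq_scaleR)
  then have "T' \<bullet> Th = (g * sk) * (Th \<bullet> \<phi> (x t)) + (- (\<eta> t * \<bar>kp\<bar> * bb)) * (Th \<bullet> Th)"
    by (simp add: inner_add_left inner_diff_left inner_commute[of "\<phi> (x t)" Th])
  then have P5: "T' \<bullet> Th + Th \<bullet> T' = 2 * (g * sk * (Th \<bullet> \<phi> (x t)) - \<eta> t * \<bar>kp\<bar> * bb * (Th \<bullet> Th))"
    by (simp add: inner_commute[of Th T'])
  have P3: "k' = - r t * g * sk - \<eta> t * \<bar>kp\<bar> * bb * Kr"
    unfolding k'_def using ER by simp
  have kp2: "\<bar>kp\<bar> * \<bar>kp\<bar> = kp^2" by (simp add: power2_eq_square)
  have Tf: "Tf kx kr \<theta> kxh krh thh t = Kx \<bullet> Kx + Kr^2 + Th \<bullet> Th"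
    by (simp add: Tf_def Kx_def Kr_def Th_def)
  have fin: "(ep \<bullet> (P *v e) + e \<bullet> (P *v ep)) + \<bar>kp\<bar> * ((K' \<bullet> Kx + Kx \<bullet> K') + 2 * Kr * k' + (T' \<bullet> Th + Th \<bullet> T'))
      = - (e \<bullet> (Q *v e)) - 2 * \<eta> t * kp^2 * bb * Tf kx kr \<theta> kxh krh thh t"
  proof -
    define a where "a = \<bar>kp\<bar>"
    define q where "q = e \<bullet> (Q *v e)"
    define X where "X = Kx \<bullet> x t"
    define F where "F = Th \<bullet> \<phi> (x t)"
    define KK where "KK = Kx \<bullet> Kx"
    define TT where "TT = Th \<bullet> Th"
    have kpa: "kp = a * sk" using abs_sk by (simp add: a_def)
    have zz: "z = X + Kr * r t - F" by (simp add: z_def X_def F_def)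
    have lhs: "(ep \<bullet> (P *v e) + e \<bullet> (P *v ep)) + \<bar>kp\<bar> * ((K' \<bullet> Kx + Kx \<bullet> K') + 2 * Kr * k' + (T' \<bullet> Th + Th \<bullet> T'))
      = - q + 2 * kp * z * g
        + a * (2 * (- g * sk * X - \<eta> t * a * bb * KK)
                 + 2 * Kr * (- r t * g * sk - \<eta> t * a * bb * Kr)
                 + 2 * (g * sk * F - \<eta> t * a * bb * TT))"
      unfolding P1 P2 P4 P5 P3 by (simp add: a_def q_def X_def F_def KK_def TT_def)
    have rhs: "- (e \<bullet> (Q *v e)) - 2 * \<eta> t * kp^2 * bb * Tf kx kr \<theta> kxh krh thh t
       = - q - 2 * \<eta> t * (a * a) * bb * (KK + Kr^2 + TT)"
      unfolding Tf kp2[symmetric] by (simp add: a_def q_def KK_def TT_def)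
    have "- q + 2 * kp * z * g
        + a * (2 * (- g * sk * X - \<eta> t * a * bb * KK)
                 + 2 * Kr * (- r t * g * sk - \<eta> t * a * bb * Kr)
                 + 2 * (g * sk * F - \<eta> t * a * bb * TT))
        = - q - 2 * \<eta> t * (a * a) * bb * (KK + Kr^2 + TT)"
      unfolding kpa zz by (simp add: algebra_simps power2_eq_square)
    then show ?thesis using lhs rhs by simp
  qed
  show ?thesis using DERIV_cong[OF dV fin] by (simp add: e_def bb_def)
qed




lemma sum_UNIV_sum: "sum f (UNIV :: ('a::finite + 'b::finite) set) = sum (f \<circ> Inl) UNIV + sum (f \<circ> Inr) UNIV"
  by (metis UNIV_Plus_UNIV finite sum.Plus)

lemma chi_norm2:
  "(norm (chi kx kr \<theta> x xr kxh krh thh t))^2 = (x t - xr t) \<bullet> (x t - xr t) + Tf kx kr \<theta> kxh krh thh t"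
  unfolding power2_norm_eq_inner inner_vec_def
  by (simp add: sum_UNIV_sum chi_def Tf_def o_def power2_eq_square inner_vec_def)

lemma V_bounds:
  assumes P: "sym_pos_def P" and kp: "kp \<noteq> 0"
  shows "min (lambda_min P) \<bar>kp\<bar> * (norm (chi kx kr \<theta> x xr kxh krh thh t))^2 \<le> Vf P kp kx kr \<theta> x xr kxh krh thh t"
    "Vf P kp kx kr \<theta> x xr kxh krh thh t \<le> max (lambda_max P) \<bar>kp\<bar> * (norm (chi kx kr \<theta> x xr kxh krh thh t))^2"
proof -
  have symP: "transpose P = P" using P by (simp add: sym_pos_def_def)
  define e where "e = x t - xr t"
  define T where "T = Tf kx kr \<theta> kxh krh thh t"
  have V: "Vf P kp kx kr \<theta> x xr kxh krh thh t = e \<bullet> (P *v e) + \<bar>kp\<bar> * T"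
    by (simp add: Vf_def Tf_def e_def T_def)
  have N: "(norm (chi kx kr \<theta> x xr kxh krh thh t))^2 = e \<bullet> e + T"
    by (simp add: chi_norm2 e_def T_def)
  have T0: "T \<ge> 0" by (simp add: T_def Tf_def)
  have ee: "e \<bullet> e \<ge> 0" by simp
  have l1: "lambda_min P * (e \<bullet> e) \<le> e \<bullet> (P *v e)" by (rule spectral_bounds(3)[OF symP])
  have l2: "e \<bullet> (P *v e) \<le> lambda_max P * (e \<bullet> e)" by (rule spectral_bounds(4)[OF symP])
  have "min (lambda_min P) \<bar>kp\<bar> * (e \<bullet> e) \<le> lambda_min P * (e \<bullet> e)"
    by (rule mult_right_mono[OF _ ee]) simp
  moreover have "min (lambda_min P) \<bar>kp\<bar> * T \<le> \<bar>kp\<bar> * T"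
    by (rule mult_right_mono[OF _ T0]) simp
  ultimately show "min (lambda_min P) \<bar>kp\<bar> * (norm (chi kx kr \<theta> x xr kxh krh thh t))^2 \<le> Vf P kp kx kr \<theta> x xr kxh krh thh t"
    unfolding V N using l1 by (simp add: distrib_left)
  have "lambda_max P * (e \<bullet> e) \<le> max (lambda_max P) \<bar>kp\<bar> * (e \<bullet> e)"
    by (rule mult_right_mono[OF _ ee]) simp
  moreover have "\<bar>kp\<bar> * T \<le> max (lambda_max P) \<bar>kp\<bar> * T"
    by (rule mult_right_mono[OF _ T0]) simp
  ultimately show "Vf P kp kx kr \<theta> x xr kxh krh thh t \<le> max (lambda_max P) \<bar>kp\<bar> * (norm (chi kx kr \<theta> x xr kxh krh thh t))^2"
    unfolding V N using l2 by (simp add: distrib_left)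
qed

lemma norm_from_V:
  fixes nt na m1 M1 c Vt Va :: real
  assumes "m1 > 0" "m1 * nt^2 \<le> Vt" "Vt \<le> c * Va" "Va \<le> M1 * na^2" "c \<ge> 0" "nt \<ge> 0" "na \<ge> 0" "M1 \<ge> 0"
  shows "nt \<le> sqrt (M1 / m1) * sqrt c * na"
proof -
  have "m1 * nt^2 \<le> c * (M1 * na^2)"
    using assms by (meson mult_left_mono order_trans)
  then have "nt^2 \<le> (M1 / m1 * c) * na^2" using assms(1) by (simp add: field_simps)
  moreover have "(sqrt (M1 / m1) * sqrt c * na)^2 = (M1 / m1 * c) * na^2"
    using assms by (simp add: power_mult_distrib)
  ultimately have "nt^2 \<le> (sqrt (M1 / m1) * sqrt c * na)^2" by simp
  then show ?thesis by (rule power2_le_imp_le) (use assms in simp)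
qed

lemma core:
  fixes A :: "real^'n^'n" and b :: "real^'n" and kp :: real and \<theta> :: "real^'p"
    and \<phi> :: "real^'n \<Rightarrow> real^'p"
    and Ar :: "real^'n^'n" and br :: "real^'n" and r :: "real \<Rightarrow> real"
    and xr :: "real \<Rightarrow> real^'n"
    and P Q :: "real^'n^'n" and kx :: "real^'n" and kr :: real
    and t0 tq :: real
    and Ym :: "real \<Rightarrow> real^('n + unit + 'p)^'n" and \<eta> :: "real \<Rightarrow> real"
  assumes bb: "b \<bullet> b > 0"
    and kp: "kp \<noteq> 0"
    and xr_cont: "continuous_on {t0..} xr"
    and xr_ode: "\<exists>S. countable S \<and>
        (\<forall>t\<in>{t0<..} - S. (xr has_vector_derivative (Ar *v xr t + r t *s br)) (at t))"
    and P_pd: "sym_pos_def P" and Q_pd: "sym_pos_def Q"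
    and lyap: "transpose Ar ** P + P ** Ar + Q = 0"
    and match_x: "A + kp *\<^sub>R outer b kx = Ar"
    and match_r: "(kp * kr) *s b = br"
    and Ym: "\<forall>t\<ge>tq. Ym t = WT A b kp \<theta>"
    and eta: "\<forall>t. \<eta> t = (if t < tq then 0 else 1)"
    and s: "t0 \<le> s"
    and sol: "cl_solution A b kp \<theta> \<phi> Ar br r P xr Ym \<eta> s x kxh krh thh"
  shows "\<forall>t\<ge>s. Vf P kp kx kr \<theta> x xr kxh krh thh t \<le> Vf P kp kx kr \<theta> x xr kxh krh thh s"
    "\<forall>a t. s \<le> a \<longrightarrow> tq \<le> a \<longrightarrow> a \<le> t \<longrightarrow>
       Vf P kp kx kr \<theta> x xr kxh krh thh t \<le>
       exp (- (min (lambda_min Q) (2 * \<bar>kp\<bar>^2 * (b \<bullet> b)) / max (lambda_max P) \<bar>kp\<bar>) * (t - a))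
         * Vf P kp kx kr \<theta> x xr kxh krh thh a"
proof -
  define V where "V = Vf P kp kx kr \<theta> x xr kxh krh thh"
  define T where "T = Tf kx kr \<theta> kxh krh thh"
  define D where "D u = - ((x u - xr u) \<bullet> (Q *v (x u - xr u))) - 2 * \<eta> u * kp^2 * (b \<bullet> b) * T u" for u
  have symP: "transpose P = P" using P_pd by (simp add: sym_pos_def_def)
  have symQ: "transpose Q = Q" using Q_pd by (simp add: sym_pos_def_def)
  obtain S where S: "countable S" and solS: "\<forall>t\<in>{s<..} - S.
        (let e = x t - xr t;
             u = kxh t \<bullet> x t + krh t * r t - thh t \<bullet> \<phi> (x t);
             g = e \<bullet> (P *v b)
         in (x has_vector_derivative (A *v x t + (kp * (u + \<theta> \<bullet> \<phi> (x t))) *s b)) (at t) \<and>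
            (kxh has_vector_derivative
               ((- g * sgn kp) *s x t + (\<eta> t * sgn kp) *s (transpose (E1 Ar (Ym t) (kxh t)) *v b))) (at t) \<and>
            (krh has_real_derivative
               (- r t * g * sgn kp + \<eta> t * sgn kp * (E2 br (Ym t) (krh t) \<bullet> b))) (at t) \<and>
            (thh has_vector_derivative
               ((g * sgn kp) *s \<phi> (x t) + (\<eta> t * sgn kp) *s (transpose (E3 (Ym t) (thh t)) *v b))) (at t))"
    using sol unfolding cl_solution_def by blast
  have cx: "continuous_on {s..} x" and ck: "continuous_on {s..} kxh" and ckr: "continuous_on {s..} krh"
    and cth: "continuous_on {s..} thh" using sol unfolding cl_solution_def by blast+
  have cxr: "continuous_on {s..} xr" using s by (intro continuous_on_subset[OF xr_cont]) auto
  obtain Sr where Sr: "countable Sr" and hxr: "\<forall>t\<in>{t0<..} - Sr. (xr has_vector_derivative (Ar *v xr t + r t *s br)) (at t)"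
    using xr_ode by blast
  define C where "C = S \<union> Sr"
  have C: "countable C" using S Sr by (simp add: C_def)
  have der: "(V has_real_derivative D u) (at u)" if u: "u \<in> {s<..} - C" for u
  proof -
    have etaY: "\<eta> u = 0 \<or> (\<eta> u = 1 \<and> Ym u = WT A b kp \<theta>)"
      using eta Ym by (cases "u < tq") auto
    have h1: "(xr has_vector_derivative (Ar *v xr u + r u *s br)) (at u)"
      using hxr u s by (auto simp: C_def)
    show ?thesis
      unfolding V_def D_def T_def
      by (rule V_deriv[where \<eta>=\<eta> and t=u and Ym=Ym and xr=xr and r=r and x=x and kxh=kxh and krh=krh and thh=thh, OF symP lyap match_x match_r kp etaY h1]) (use solS u in \<open>auto simp: C_def\<close>)
  qed
  have contV: "continuous_on {s..} V"
    unfolding V_def Vf_def[abs_def]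
    by (intro continuous_intros bounded_linear.continuous_on[OF matrix_vector_mul_bounded_linear] cx cxr ck ckr cth)
  have Qnn: "(x u - xr u) \<bullet> (Q *v (x u - xr u)) \<ge> lambda_min Q * ((x u - xr u) \<bullet> (x u - xr u))" for u
    by (rule spectral_bounds(3)[OF symQ])
  have lQ: "lambda_min Q > 0" by (rule pd_lambda_min_pos[OF Q_pd])
  have T0: "T u \<ge> 0" for u by (simp add: T_def Tf_def)
  have eta0: "\<eta> u \<ge> 0" for u using eta by simp
  have Dneg: "D u \<le> 0" for u
  proof -
    have "0 \<le> lambda_min Q * ((x u - xr u) \<bullet> (x u - xr u))" using lQ by simp
    moreover have "0 \<le> 2 * \<eta> u * kp^2 * (b \<bullet> b) * T u" using eta0[of u] T0[of u] bb by simp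
    ultimately show ?thesis unfolding D_def using Qnn[of u] by linarith
  qed
  show "\<forall>t\<ge>s. Vf P kp kx kr \<theta> x xr kxh krh thh t \<le> Vf P kp kx kr \<theta> x xr kxh krh thh s"
  proof (intro allI impI)
    fix t assume "s \<le> t"
    have "V t \<le> V s"
      by (rule mono_countable[OF \<open>s \<le> t\<close> C continuous_on_subset[OF contV], of D])
        (use der Dneg in auto)
    then show "Vf P kp kx kr \<theta> x xr kxh krh thh t \<le> Vf P kp kx kr \<theta> x xr kxh krh thh s"
      by (simp add: V_def)
  qed
  define m2 where "m2 = min (lambda_min Q) (2 * \<bar>kp\<bar>^2 * (b \<bullet> b))"
  define M1 where "M1 = max (lambda_max P) \<bar>kp\<bar>"
  define k where "k = m2 / M1"
  have M1: "M1 > 0" using kp by (simp add: M1_def less_max_iff_disj)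
  have m2: "m2 > 0" using lQ kp bb by (simp add: m2_def)
  have k0: "k \<ge> 0" using M1 m2 by (simp add: k_def)
  have Dk: "D u \<le> - k * V u" if "tq \<le> u" for u
  proof -
    have et: "\<eta> u = 1" using eta that by simp
    define n2 where "n2 = (norm (chi kx kr \<theta> x xr kxh krh thh u))^2"
    have n2: "n2 = (x u - xr u) \<bullet> (x u - xr u) + T u" by (simp add: n2_def chi_norm2 T_def)
    have "m2 * ((x u - xr u) \<bullet> (x u - xr u)) \<le> lambda_min Q * ((x u - xr u) \<bullet> (x u - xr u))"
      by (rule mult_right_mono) (auto simp: m2_def)
    moreover have "m2 * T u \<le> 2 * kp^2 * (b \<bullet> b) * T u"
      by (rule mult_right_mono[OF _ T0]) (auto simp: m2_def)
    ultimately have "D u \<le> - m2 * n2"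
      unfolding D_def n2 et using Qnn[of u] by (simp add: algebra_simps)
    moreover have "V u \<le> M1 * n2"
      unfolding V_def M1_def n2_def by (rule V_bounds(2)[OF P_pd kp])
    then have "k * V u \<le> k * (M1 * n2)" by (rule mult_left_mono[OF _ k0])
    then have "k * V u \<le> m2 * n2" using M1 by (simp add: k_def)
    ultimately show ?thesis by simp
  qed
  show "\<forall>a t. s \<le> a \<longrightarrow> tq \<le> a \<longrightarrow> a \<le> t \<longrightarrow>
       Vf P kp kx kr \<theta> x xr kxh krh thh t \<le>
       exp (- (min (lambda_min Q) (2 * \<bar>kp\<bar>^2 * (b \<bullet> b)) / max (lambda_max P) \<bar>kp\<bar>) * (t - a))
         * Vf P kp kx kr \<theta> x xr kxh krh thh a"
  proof (intro allI impI)
    fix a t assume sa: "s \<le> a" and qa: "tq \<le> a" and at: "a \<le> t"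
    define W where "W u = exp (k * (u - a)) * V u" for u
    define W' where "W' u = exp (k * (u - a)) * k * V u + exp (k * (u - a)) * D u" for u
    have "W t \<le> W a"
    proof (rule mono_countable[OF at C, of W W'])
      show "continuous_on {a..t} W" unfolding W_def
        by (intro continuous_intros continuous_on_subset[OF contV]) (use sa in auto)
      fix u assume u: "u \<in> {a<..<t} - C"
      then have "u \<in> {s<..} - C" using sa by auto
      then show "(W has_real_derivative W' u) (at u)"
        unfolding W_def W'_def by (auto intro!: derivative_eq_intros der)
      have "D u \<le> - k * V u" using Dk[of u] u qa by auto
      then have "k * V u + D u \<le> 0" by simp
      then have "exp (k * (u - a)) * (k * V u + D u) \<le> 0" by (simp add: mult_nonneg_nonpos)
      then show "W' u \<le> 0" by (simp add: W'_def algebra_simps)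
    qed
    then have "exp (k * (t - a)) * V t \<le> V a" by (simp add: W_def)
    then have "exp (- k * (t - a)) * (exp (k * (t - a)) * V t) \<le> exp (- k * (t - a)) * V a"
      by (rule mult_left_mono) simp
    then have "V t \<le> exp (- k * (t - a)) * V a"
      by (simp add: mult.assoc[symmetric] exp_add[symmetric])
    then show "Vf P kp kx kr \<theta> x xr kxh krh thh t \<le>
       exp (- (min (lambda_min Q) (2 * \<bar>kp\<bar>^2 * (b \<bullet> b)) / max (lambda_max P) \<bar>kp\<bar>) * (t - a))
         * Vf P kp kx kr \<theta> x xr kxh krh thh a"
      by (simp add: V_def k_def m2_def M1_def)
  qed
qed

theorem theorem1:
  fixes A :: "real^'n^'n" and b :: "real^'n" and kp :: real and \<theta> :: "real^'p"
    and \<phi> :: "real^'n \<Rightarrow> real^'p"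
    and Ar :: "real^'n^'n" and br :: "real^'n" and r :: "real \<Rightarrow> real"
    and xr :: "real \<Rightarrow> real^'n"
    and P Q :: "real^'n^'n" and kx :: "real^'n" and kr :: real
    and t0 tq :: real
    and Ym :: "real \<Rightarrow> real^('n + unit + 'p)^'n" and \<eta> :: "real \<Rightarrow> real"
  assumes bb: "b \<bullet> b > 0"
    and kp: "kp \<noteq> 0"
    and phi_lip: "loc_lipschitz \<phi>"
    and hurw: "hurwitz Ar"
    and r_bdd: "bounded (r ` {t0..})"
    and r_pw: "pw_continuous_from t0 r"
    and xr_cont: "continuous_on {t0..} xr"
    and xr_ode: "\<exists>S. countable S \<and>
        (\<forall>t\<in>{t0<..} - S. (xr has_vector_derivative (Ar *v xr t + r t *s br)) (at t))"
    and P_pd: "sym_pos_def P" and Q_pd: "sym_pos_def Q"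
    and lyap: "transpose Ar ** P + P ** Ar + Q = 0"
    and match_x: "A + kp *\<^sub>R outer b kx = Ar"
    and match_r: "(kp * kr) *s b = br"
    and tq: "tq > t0"
    and Ym: "\<forall>t\<ge>tq. Ym t = WT A b kp \<theta>"
    and eta: "\<forall>t. \<eta> t = (if t < tq then 0 else 1)"
  shows
    "(\<forall>\<epsilon>>0. \<exists>\<delta>>0. \<forall>s\<ge>t0. \<forall>x kxh krh thh.
        cl_solution A b kp \<theta> \<phi> Ar br r P xr Ym \<eta> s x kxh krh thh \<and>
        norm (chi kx kr \<theta> x xr kxh krh thh s) < \<delta> \<longrightarrow>
        (\<forall>t\<ge>s. norm (chi kx kr \<theta> x xr kxh krh thh t) < \<epsilon>))
   \<and> (\<exists>c>0. \<exists>a>0. \<exists>k>0. \<forall>s\<ge>tq. \<forall>x kxh krh thh.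
        cl_solution A b kp \<theta> \<phi> Ar br r P xr Ym \<eta> s x kxh krh thh \<and>
        norm (chi kx kr \<theta> x xr kxh krh thh s) < c \<longrightarrow>
        (\<forall>t\<ge>s. norm (chi kx kr \<theta> x xr kxh krh thh t)
                 \<le> a * exp (- k * (t - s)) * norm (chi kx kr \<theta> x xr kxh krh thh s)))
   \<and> (let \<kappa> = (1/2) * min (lambda_min Q) (2 * \<bar>kp\<bar>^2 * (b \<bullet> b))
                / max (lambda_max P) \<bar>kp\<bar>;
          \<alpha> = sqrt (max (lambda_max P) \<bar>kp\<bar> / min (lambda_min P) \<bar>kp\<bar>)
      in \<forall>x kxh krh thh. cl_solution A b kp \<theta> \<phi> Ar br r P xr Ym \<eta> t0 x kxh krh thh \<longrightarrow>
           (\<forall>t>tq. norm (chi kx kr \<theta> x xr kxh krh thh t)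
                    \<le> \<alpha> * exp (- \<kappa> * (t - tq)) * norm (chi kx kr \<theta> x xr kxh krh thh t0)))"
proof -
  define m1 where "m1 = min (lambda_min P) \<bar>kp\<bar>"
  define M1 where "M1 = max (lambda_max P) \<bar>kp\<bar>"
  define m2 where "m2 = min (lambda_min Q) (2 * \<bar>kp\<bar>^2 * (b \<bullet> b))"
  define k where "k = (1/2) * m2 / M1"
  define \<alpha> where "\<alpha> = sqrt (M1 / m1)"
  have lP: "lambda_min P > 0" by (rule pd_lambda_min_pos[OF P_pd])
  have lQ: "lambda_min Q > 0" by (rule pd_lambda_min_pos[OF Q_pd])
  have m1: "m1 > 0" using lP kp by (simp add: m1_def)
  have M1: "M1 > 0" using kp by (simp add: M1_def less_max_iff_disj)
  have m2: "m2 > 0" using lQ kp bb by (simp add: m2_def)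
  have k: "k > 0" using m2 M1 by (simp add: k_def)
  have \<alpha>: "\<alpha> > 0" using m1 M1 by (simp add: \<alpha>_def)
  note C = core[OF bb kp xr_cont xr_ode P_pd Q_pd lyap match_x match_r Ym eta]
  have expk: "exp (- (m2 / M1) * y) = (exp (- k * y))^2" for y
    by (simp add: k_def exp_double[symmetric] power2_eq_square exp_add[symmetric] field_simps)
  have sqe: "sqrt ((exp (- k * y))^2) = exp (- k * y)" for y by simp
  have decay: "norm (chi kx kr \<theta> x xr kxh krh thh t) \<le> \<alpha> * exp (- k * (t - a)) * norm (chi kx kr \<theta> x xr kxh krh thh s)"
    if s: "t0 \<le> s" and sol: "cl_solution A b kp \<theta> \<phi> Ar br r P xr Ym \<eta> s x kxh krh thh"
      and sa: "s \<le> a" and qa: "tq \<le> a" and at: "a \<le> t" for s a t x kxh krh thh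
  proof -
    note CC = C[OF s sol]
    have Vt: "Vf P kp kx kr \<theta> x xr kxh krh thh t \<le> exp (- (m2 / M1) * (t - a)) * Vf P kp kx kr \<theta> x xr kxh krh thh a"
      using CC(2) sa qa at by (simp add: m2_def M1_def)
    have "Vf P kp kx kr \<theta> x xr kxh krh thh a \<le> Vf P kp kx kr \<theta> x xr kxh krh thh s"
      using CC(1) sa by simp
    then have "exp (- (m2 / M1) * (t - a)) * Vf P kp kx kr \<theta> x xr kxh krh thh a \<le> exp (- (m2 / M1) * (t - a)) * Vf P kp kx kr \<theta> x xr kxh krh thh s"
      by (rule mult_left_mono) simp
    with Vt have V2: "Vf P kp kx kr \<theta> x xr kxh krh thh t \<le> exp (- (m2 / M1) * (t - a)) * Vf P kp kx kr \<theta> x xr kxh krh thh s"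
      by linarith
    have "norm (chi kx kr \<theta> x xr kxh krh thh t) \<le> sqrt (M1 / m1) * sqrt (exp (- (m2 / M1) * (t - a))) * norm (chi kx kr \<theta> x xr kxh krh thh s)"
      by (rule norm_from_V[OF m1 _ V2])
        (use V_bounds[OF P_pd kp] M1 in \<open>simp_all add: m1_def M1_def\<close>)
    then show ?thesis unfolding expk sqe \<alpha>_def .
  qed
  show ?thesis
  proof (intro conjI)
    show "\<forall>\<epsilon>>0. \<exists>\<delta>>0. \<forall>s\<ge>t0. \<forall>x kxh krh thh.
        cl_solution A b kp \<theta> \<phi> Ar br r P xr Ym \<eta> s x kxh krh thh \<and>
        norm (chi kx kr \<theta> x xr kxh krh thh s) < \<delta> \<longrightarrow>
        (\<forall>t\<ge>s. norm (chi kx kr \<theta> x xr kxh krh thh t) < \<epsilon>)"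
    proof (intro allI impI)
      fix \<epsilon> :: real assume e: "\<epsilon> > 0"
      show "\<exists>\<delta>>0. \<forall>s\<ge>t0. \<forall>x kxh krh thh.
        cl_solution A b kp \<theta> \<phi> Ar br r P xr Ym \<eta> s x kxh krh thh \<and>
        norm (chi kx kr \<theta> x xr kxh krh thh s) < \<delta> \<longrightarrow>
        (\<forall>t\<ge>s. norm (chi kx kr \<theta> x xr kxh krh thh t) < \<epsilon>)"
      proof (intro exI[of _ "\<epsilon> / \<alpha>"] conjI allI impI)
        show "\<epsilon> / \<alpha> > 0" using e \<alpha> by simp
        fix s x kxh krh thh t
        assume s: "t0 \<le> s" and H: "cl_solution A b kp \<theta> \<phi> Ar br r P xr Ym \<eta> s x kxh krh thh \<and>
          norm (chi kx kr \<theta> x xr kxh krh thh s) < \<epsilon> / \<alpha>" and st: "s \<le> t"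
        note CC = C[OF s conjunct1[OF H]]
        have "Vf P kp kx kr \<theta> x xr kxh krh thh t \<le> 1 * Vf P kp kx kr \<theta> x xr kxh krh thh s"
          using CC(1) st by simp
        then have "norm (chi kx kr \<theta> x xr kxh krh thh t) \<le> sqrt (M1 / m1) * sqrt 1 * norm (chi kx kr \<theta> x xr kxh krh thh s)"
          by (intro norm_from_V[OF m1])
            (use V_bounds[OF P_pd kp] M1 in \<open>simp_all add: m1_def M1_def\<close>)
        also have "\<dots> = \<alpha> * norm (chi kx kr \<theta> x xr kxh krh thh s)" by (simp add: \<alpha>_def)
        also have "\<dots> < \<alpha> * (\<epsilon> / \<alpha>)" by (rule mult_strict_left_mono[OF conjunct2[OF H] \<alpha>])
        also have "\<dots> = \<epsilon>" using \<alpha> by simp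
        finally show "norm (chi kx kr \<theta> x xr kxh krh thh t) < \<epsilon>" .
      qed
    qed
    show "\<exists>c>0. \<exists>a>0. \<exists>k>0. \<forall>s\<ge>tq. \<forall>x kxh krh thh.
        cl_solution A b kp \<theta> \<phi> Ar br r P xr Ym \<eta> s x kxh krh thh \<and>
        norm (chi kx kr \<theta> x xr kxh krh thh s) < c \<longrightarrow>
        (\<forall>t\<ge>s. norm (chi kx kr \<theta> x xr kxh krh thh t)
                 \<le> a * exp (- k * (t - s)) * norm (chi kx kr \<theta> x xr kxh krh thh s))"
    proof -
    have main: "\<forall>s\<ge>tq. \<forall>x kxh krh thh.
        cl_solution A b kp \<theta> \<phi> Ar br r P xr Ym \<eta> s x kxh krh thh \<and>
        norm (chi kx kr \<theta> x xr kxh krh thh s) < 1 \<longrightarrow>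
        (\<forall>t\<ge>s. norm (chi kx kr \<theta> x xr kxh krh thh t)
                 \<le> \<alpha> * exp (- k * (t - s)) * norm (chi kx kr \<theta> x xr kxh krh thh s))"
    proof (intro allI impI)
      fix s x kxh krh thh t
      assume s: "tq \<le> s" and H: "cl_solution A b kp \<theta> \<phi> Ar br r P xr Ym \<eta> s x kxh krh thh \<and>
          norm (chi kx kr \<theta> x xr kxh krh thh s) < 1" and st: "s \<le> t"
      have "t0 \<le> s" using s tq by simp
      then show "norm (chi kx kr \<theta> x xr kxh krh thh t) \<le> \<alpha> * exp (- k * (t - s)) * norm (chi kx kr \<theta> x xr kxh krh thh s)"
        using decay[of s x kxh krh thh s t] conjunct1[OF H] s st by simp
    qed
    show ?thesis using main \<alpha> k by (intro exI[of _ 1] exI[of _ \<alpha>] exI[of _ k]) auto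
    qed
    show "let \<kappa> = (1/2) * min (lambda_min Q) (2 * \<bar>kp\<bar>^2 * (b \<bullet> b))
                / max (lambda_max P) \<bar>kp\<bar>;
          \<alpha> = sqrt (max (lambda_max P) \<bar>kp\<bar> / min (lambda_min P) \<bar>kp\<bar>)
      in \<forall>x kxh krh thh. cl_solution A b kp \<theta> \<phi> Ar br r P xr Ym \<eta> t0 x kxh krh thh \<longrightarrow>
           (\<forall>t>tq. norm (chi kx kr \<theta> x xr kxh krh thh t)
                    \<le> \<alpha> * exp (- \<kappa> * (t - tq)) * norm (chi kx kr \<theta> x xr kxh krh thh t0))"
      unfolding Let_def k_def[symmetric, unfolded m2_def M1_def] \<alpha>_def[symmetric, unfolded m1_def M1_def]
    proof (intro allI impI)
      fix x kxh krh thh t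
      assume sol: "cl_solution A b kp \<theta> \<phi> Ar br r P xr Ym \<eta> t0 x kxh krh thh" and t: "tq < t"
      show "norm (chi kx kr \<theta> x xr kxh krh thh t) \<le> \<alpha> * exp (- k * (t - tq)) * norm (chi kx kr \<theta> x xr kxh krh thh t0)"
        using decay[of t0 x kxh krh thh tq t] sol tq t by simp
    qed
  qed
qed


end
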